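(* Let $n\in\mathbb{N}$, $\alpha,\beta>-1$, $\sigma:=\alpha+\beta+1$, and let $c_{ij}\equiv c_{ij}(n,\alpha,\beta)$ ($0\le i,j\le n$) be the B\'ezier coefficients of the dual Bernstein polynomials, i.e. $D^n_i(x;\alpha,\beta)=\sum_{j=0}^n c_{ij}B^n_j(x)$. Put \[ A(h):=(h-n)(h+\beta+1),\qquad B(h):=h(h-n-\alpha-1), \] and adopt the convention $c_{ij}:=0$ whenever $i$ or $j$ lies outside $\{0,\ldots,n\}$. Then for $0\le i\le n-1$ and $0\le j\le n$, \[ c_{i+1,j}=\frac{1}{A(i)}\Big\{(i-j)(2i+2j-2n-\alpha+\beta)\,c_{ij}+B(j)\,c_{i,j-1}+A(j)\,c_{i,j+1}-B(i)\,c_{i-1,j}\Big\}, \] and the first row is given by \[ c_{0j}=\frac{(\sigma+1)_n(\beta+2)_n}{n!\,B(\alpha+1,\beta+1)}\cdot\frac{(-1)^j}{(\alpha+1)_{n-j}(\beta+2)_j}\qquad(0\le j\le n). \]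
   Context: For $\alpha,\beta>-1$ define the inner product $\langle f,g\rangle:=\int_0^1(1-x)^{\alpha}x^{\beta}f(x)g(x)\,dx$. The Bernstein polynomials of degree $n$ are $B^n_i(x)=\binom ni x^i(1-x)^{n-i}$, $0\le i\le n$. The dual Bernstein polynomials $D^n_0(x;\alpha,\beta),\ldots,D^n_n(x;\alpha,\beta)$ are the unique polynomials of degree at most $n$ with $\langle D^n_i,B^n_j\rangle=\delta_{ij}$ for $i,j=0,\ldots,n$. Notation: $(c)_k:=\prod_{j=0}^{k-1}(c+j)$; $B(\lambda,\mu)=\Gamma(\lambda)\Gamma(\mu)/\Gamma(\lambda+\mu)$ (the beta function; not to be confused with the polynomial $B(h)$ defined in the claim). *)

theory Defs
  imports "HOL-Analysis.Analysis"
begin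

definition bern :: "nat \<Rightarrow> nat \<Rightarrow> real \<Rightarrow> real" where
  "bern n i x = real (n choose i) * x ^ i * (1 - x) ^ (n - i)"

definition jip :: "real \<Rightarrow> real \<Rightarrow> (real \<Rightarrow> real) \<Rightarrow> (real \<Rightarrow> real) \<Rightarrow> real" where
  "jip \<alpha> \<beta> f g = (LINT x:{0..1}|lborel. (1 - x) powr \<alpha> * x powr \<beta> * f x * g x)"

text \<open>Bezier coefficients c_ij of the dual Bernstein polynomials
  D_i = sum_j c_ij B_j, indexed by integers and extended by zero outside {0..n}.\<close>
definition dual_coeff :: "nat \<Rightarrow> real \<Rightarrow> real \<Rightarrow> int \<Rightarrow> int \<Rightarrow> real" where
  "dual_coeff n \<alpha> \<beta> = (THE c. (\<forall>i j. (i < 0 \<or> i > int n \<or> j < 0 \<or> j > int n) \<longrightarrow> c i j = 0) \<and>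
      (\<forall>i\<le>n. \<forall>k\<le>n. jip \<alpha> \<beta> (\<lambda>x. \<Sum>j\<le>n. c (int i) (int j) * bern n j x) (bern n k)
                      = (if i = k then 1 else 0)))"

end

theory Submission
  imports Defs "Jordan_Normal_Form.Determinant" "HOL-Computational_Algebra.Polynomial"
begin


definition wt :: "real \<Rightarrow> real \<Rightarrow> real \<Rightarrow> real" where
  "wt a b x = (1 - x) powr a * x powr b"

lemma wt_mono_eq:
  fixes a b x :: real and p q :: nat
  assumes "x \<in> {0..1}"
  shows "wt a b x * (x ^ p * (1 - x) ^ q) = x powr (b + 1 + real p - 1) * (1 - x) powr (a + 1 + real q - 1)"
proof (cases "x = 0 \<or> x = 1")
  case True then show ?thesis by (auto simp: wt_def)
next
  case False
  then have x: "0 < x" "x < 1" using assms by auto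
  then show ?thesis
    by (simp add: wt_def powr_add powr_realpow[symmetric])
qed

lemma wt_mono_int:
  fixes a b :: real and p q :: nat
  assumes "a > -1" "b > -1"
  shows "set_integrable lborel {0..1} (\<lambda>x. wt a b x * (x ^ p * (1 - x) ^ q))"
    and "(LINT x:{0..1}|lborel. wt a b x * (x ^ p * (1 - x) ^ q)) = Beta (b + 1 + real p) (a + 1 + real q)"
proof -
  have I: "set_integrable lborel {0..1} (\<lambda>x. x powr (b + 1 + real p - 1) * (1 - x) powr (a + 1 + real q - 1))"
    by (rule integrable_Beta) (use assms in auto)
  show S: "set_integrable lborel {0..1} (\<lambda>x. wt a b x * (x ^ p * (1 - x) ^ q))"
    by (rule set_integrable_cong[THEN iffD1, OF refl refl _ I]) (simp add: wt_mono_eq)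
  have "(LINT x:{0..1}|lborel. wt a b x * (x ^ p * (1 - x) ^ q)) =
        (LINT x:{0..1}|lborel. x powr (b + 1 + real p - 1) * (1 - x) powr (a + 1 + real q - 1))"
    by (rule set_lebesgue_integral_cong) (auto simp: wt_mono_eq)
  also have "\<dots> = integral {0..1} (\<lambda>x. x powr (b + 1 + real p - 1) * (1 - x) powr (a + 1 + real q - 1))"
    by (rule set_borel_integral_eq_integral(2)[OF I])
  also have "\<dots> = Beta (b + 1 + real p) (a + 1 + real q)"
    by (rule integral_unique, rule has_integral_Beta_real) (use assms in auto)
  finally show "(LINT x:{0..1}|lborel. wt a b x * (x ^ p * (1 - x) ^ q)) = Beta (b + 1 + real p) (a + 1 + real q)" .
qed

lemma set_int_sum:
  fixes f :: "'i \<Rightarrow> real \<Rightarrow> real"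
  assumes "finite I" "\<And>i. i \<in> I \<Longrightarrow> set_integrable M A (f i)"
  shows "set_integrable M A (\<lambda>x. \<Sum>i\<in>I. f i x)"
    and "(LINT x:A|M. (\<Sum>i\<in>I. f i x)) = (\<Sum>i\<in>I. LINT x:A|M. f i x)"
proof -
  have eq: "(\<lambda>x. indicator A x *\<^sub>R (\<Sum>i\<in>I. f i x)) = (\<lambda>x. \<Sum>i\<in>I. indicator A x *\<^sub>R f i x)"
    by (simp add: sum_distrib_left)
  show "set_integrable M A (\<lambda>x. \<Sum>i\<in>I. f i x)"
    using assms unfolding set_integrable_def eq by (intro Bochner_Integration.integrable_sum) auto
  show "(LINT x:A|M. (\<Sum>i\<in>I. f i x)) = (\<Sum>i\<in>I. LINT x:A|M. f i x)"
    using assms unfolding set_integrable_def set_lebesgue_integral_def eq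
    by (intro Bochner_Integration.integral_sum) auto
qed

lemma bern_mult:
  assumes "j \<le> n" "k \<le> n"
  shows "bern n j x * bern n k x = real (n choose j) * real (n choose k) * (x ^ (j + k) * (1 - x) ^ (2 * n - (j + k)))"
proof -
  have "2 * n - (j + k) = (n - j) + (n - k)" using assms by auto
  then show ?thesis by (simp add: bern_def power_add algebra_simps)
qed

context
  fixes n :: nat and a b :: real
  assumes a: "a > -1" and b: "b > -1"
begin

definition G :: "nat \<Rightarrow> nat \<Rightarrow> real" where
  "G j k = real (n choose j) * real (n choose k) * Beta (b + 1 + real (j + k)) (a + 1 + real (2 * n - (j + k)))"

lemma integrand_jk:
  assumes "j \<le> n" "k \<le> n"
  shows "set_integrable lborel {0..1} (\<lambda>x. (1 - x) powr a * x powr b * bern n j x * bern n k x)"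
    and "(LINT x:{0..1}|lborel. (1 - x) powr a * x powr b * bern n j x * bern n k x) = G j k"
proof -
  have eq: "(1 - x) powr a * x powr b * bern n j x * bern n k x =
     real (n choose j) * real (n choose k) * (wt a b x * (x ^ (j + k) * (1 - x) ^ (2 * n - (j + k))))" for x
    using bern_mult[OF assms, of x] by (simp add: wt_def algebra_simps)
  show "set_integrable lborel {0..1} (\<lambda>x. (1 - x) powr a * x powr b * bern n j x * bern n k x)"
    unfolding eq using wt_mono_int(1)[OF a b] by (intro set_integrable_mult_right) auto
  show "(LINT x:{0..1}|lborel. (1 - x) powr a * x powr b * bern n j x * bern n k x) = G j k"
    unfolding eq G_def by (simp add: wt_mono_int(2)[OF a b])
qed

lemma jip_double:
  shows "jip a b (\<lambda>x. \<Sum>j\<le>n. u j * bern n j x) (\<lambda>x. \<Sum>k\<le>n. v k * bern n k x)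
     = (\<Sum>j\<le>n. \<Sum>k\<le>n. u j * v k * G j k)"
    and "set_integrable lborel {0..1} (\<lambda>x. (1 - x) powr a * x powr b * (\<Sum>j\<le>n. u j * bern n j x) * (\<Sum>k\<le>n. v k * bern n k x))"
proof -
  have eq: "(1 - x) powr a * x powr b * (\<Sum>j\<le>n. u j * bern n j x) * (\<Sum>k\<le>n. v k * bern n k x)
     = (\<Sum>j\<le>n. \<Sum>k\<le>n. u j * v k * ((1 - x) powr a * x powr b * bern n j x * bern n k x))" for x
    by (simp add: sum_distrib_left sum_distrib_right algebra_simps)
  have I: "set_integrable lborel {0..1} (\<lambda>x. \<Sum>k\<le>n. u j * v k * ((1 - x) powr a * x powr b * bern n j x * bern n k x))"
    if "j \<le> n" for j
    using that integrand_jk(1) by (intro set_int_sum(1) set_integrable_mult_right) auto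
  show "set_integrable lborel {0..1} (\<lambda>x. (1 - x) powr a * x powr b * (\<Sum>j\<le>n. u j * bern n j x) * (\<Sum>k\<le>n. v k * bern n k x))"
    unfolding eq using I by (intro set_int_sum(1)[where f="(\<lambda>j x. \<Sum>k\<le>n. u j * v k * ((1 - x) powr a * x powr b * bern n j x * bern n k x))"]) auto
  have "jip a b (\<lambda>x. \<Sum>j\<le>n. u j * bern n j x) (\<lambda>x. \<Sum>k\<le>n. v k * bern n k x)
     = (LINT x:{0..1}|lborel. (\<Sum>j\<le>n. \<Sum>k\<le>n. u j * v k * ((1 - x) powr a * x powr b * bern n j x * bern n k x)))"
    unfolding jip_def eq ..
  also have "\<dots> = (\<Sum>j\<le>n. LINT x:{0..1}|lborel. (\<Sum>k\<le>n. u j * v k * ((1 - x) powr a * x powr b * bern n j x * bern n k x)))"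
    using I by (intro set_int_sum(2)[where f="(\<lambda>j x. \<Sum>k\<le>n. u j * v k * ((1 - x) powr a * x powr b * bern n j x * bern n k x))"]) auto
  also have "\<dots> = (\<Sum>j\<le>n. \<Sum>k\<le>n. u j * v k * G j k)"
  proof (rule sum.cong[OF refl])
    fix j assume j: "j \<in> {..n}"
    have "(LINT x:{0..1}|lborel. (\<Sum>k\<le>n. u j * v k * ((1 - x) powr a * x powr b * bern n j x * bern n k x)))
       = (\<Sum>k\<le>n. LINT x:{0..1}|lborel. u j * v k * ((1 - x) powr a * x powr b * bern n j x * bern n k x))"
      using j integrand_jk(1) by (intro set_int_sum(2) set_integrable_mult_right) auto
    also have "\<dots> = (\<Sum>k\<le>n. u j * v k * G j k)"
      using j integrand_jk(2) by (intro sum.cong) auto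
    finally show "(LINT x:{0..1}|lborel. (\<Sum>k\<le>n. u j * v k * ((1 - x) powr a * x powr b * bern n j x * bern n k x)))
       = (\<Sum>k\<le>n. u j * v k * G j k)" .
  qed
  finally show "jip a b (\<lambda>x. \<Sum>j\<le>n. u j * bern n j x) (\<lambda>x. \<Sum>k\<le>n. v k * bern n k x)
     = (\<Sum>j\<le>n. \<Sum>k\<le>n. u j * v k * G j k)" .
qed

end


lemma bern_subst:
  fixes t :: real assumes t: "t > 0" and k: "k \<le> n"
  shows "bern n k (t / (1 + t)) = real (n choose k) * t ^ k / (1 + t) ^ n"
proof -
  have 1: "1 - t / (1 + t) = 1 / (1 + t)" using t by (simp add: field_simps)
  have "(1 + t) ^ n = (1 + t) ^ k * (1 + t) ^ (n - k)"
    using k by (simp add: power_add[symmetric])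
  then show ?thesis using t unfolding bern_def 1
    by (simp add: power_divide field_simps)
qed

context
  fixes n :: nat and a b :: real
  assumes a: "a > -1" and b: "b > -1"
begin

lemma G_definite:
  assumes h: "\<And>j. j \<le> n \<Longrightarrow> (\<Sum>k\<le>n. G n a b j k * v k) = 0"
  shows "k \<le> n \<Longrightarrow> v k = 0"
proof -
  define f where "f x = (\<Sum>k\<le>n. v k * bern n k x)" for x
  define g where "g x = (1 - x) powr a * x powr b * f x * f x" for x
  have "jip a b f f = (\<Sum>j\<le>n. \<Sum>k\<le>n. v j * v k * G n a b j k)"
    unfolding f_def by (rule jip_double[OF a b])
  also have "\<dots> = (\<Sum>j\<le>n. v j * (\<Sum>k\<le>n. G n a b j k * v k))"
    by (simp add: sum_distrib_left mult_ac)
  also have "\<dots> = 0" using h by simp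
  finally have J0: "jip a b f f = 0" .
  have SI: "set_integrable lborel {0..1} g"
    unfolding g_def f_def by (rule jip_double(2)[OF a b])
  have gint: "g integrable_on {0..1}" and gI: "integral {0..1} g = 0"
    using set_borel_integral_eq_integral[OF SI] J0 unfolding jip_def g_def[symmetric] by auto
  have gnn: "0 \<le> g x" if "x \<in> {0..1}" for x
    unfolding g_def by (metis mult.assoc mult_nonneg_nonneg powr_ge_zero zero_le_square)
  have f0: "f x = 0" if x: "0 < x" "x < 1" for x
  proof (rule ccontr)
    assume fx: "f x \<noteq> 0"
    define lo where "lo = x / 2"
    define hi where "hi = (1 + x) / 2"
    have lohi: "0 < lo" "lo < x" "x < hi" "hi < 1" using x by (auto simp: lo_def hi_def)
    have sub: "{lo..hi} \<subseteq> {0..1}" using lohi by auto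
    have gint2: "g integrable_on {lo..hi}" by (rule integrable_on_subinterval[OF gint sub])
    have "integral {lo..hi} g \<le> integral {0..1} g"
      using sub gint2 gint gnn by (intro integral_subset_le) auto
    moreover have "integral {lo..hi} g \<ge> 0"
      using gint2 gnn sub by (intro integral_nonneg) auto
    ultimately have "integral {lo..hi} g = 0" using gI by simp
    then have hi0: "(g has_integral 0) (cbox lo hi)"
      using gint2 by (metis cbox_interval has_integral_integral)
    have cont: "continuous_on (cbox lo hi) g"
      unfolding g_def f_def bern_def cbox_interval using lohi
      by (intro continuous_intros) auto
    have "g x = 0"
      by (rule has_integral_0_cbox_imp_0[OF cont _ hi0]) (use lohi gnn in auto)
    moreover have "(1 - x) powr a * x powr b > 0" using x by simp
    ultimately show False using fx x unfolding g_def by simp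
  qed
  define c where "c k = v k * real (n choose k)" for k
  have root: "(\<Sum>k\<le>n. c k * t ^ k) = 0" if t: "t > 0" for t :: real
  proof -
    have "0 < t / (1 + t)" "t / (1 + t) < 1" using t by (auto simp: field_simps)
    then have "0 = f (t / (1 + t))" using f0 by simp
    also have "\<dots> = (\<Sum>k\<le>n. c k * t ^ k) / (1 + t) ^ n"
      unfolding f_def c_def using t by (simp add: bern_subst sum_divide_distrib mult.assoc)
    finally show ?thesis using t by simp
  qed
  have "{0<..} \<subseteq> {t::real. (\<Sum>k\<le>n. c k * t ^ k) = 0}" using root by auto
  then have "infinite {t::real. (\<Sum>k\<le>n. c k * t ^ k) = 0}"
    using infinite_Ioi finite_subset by blast
  then have "\<forall>k\<le>n. c k = 0" using polyfun_finite_roots[of c n] by blast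
  then show "k \<le> n \<Longrightarrow> v k = 0" by (simp add: c_def)
qed

end


context
  fixes n :: nat and a b :: real
  assumes a: "a > -1" and b: "b > -1"
begin

definition Gm :: "real mat" where "Gm = mat (Suc n) (Suc n) (\<lambda>(j,k). G n a b j k)"

lemma Gm_carrier: "Gm \<in> carrier_mat (Suc n) (Suc n)" by (simp add: Gm_def)

lemma Gm_det: "det Gm \<noteq> 0"
proof
  assume "det Gm = 0"
  then obtain v where v: "v \<in> carrier_vec (Suc n)" "v \<noteq> 0\<^sub>v (Suc n)" "Gm *\<^sub>v v = 0\<^sub>v (Suc n)"
    using det_0_iff_vec_prod_zero_field[OF Gm_carrier] by blast
  have "(\<Sum>k\<le>n. G n a b j k * v $ k) = 0" if j: "j \<le> n" for j
  proof -
    have "(Gm *\<^sub>v v) $ j = 0" using v(3) j by (metis index_zero_vec(1) less_Suc_eq_le)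
    moreover have "(Gm *\<^sub>v v) $ j = Matrix.row Gm j \<bullet> v" using j Gm_carrier by simp
    moreover have "\<dots> = (\<Sum>k\<in>{0..<Suc n}. Matrix.row Gm j $ k * v $ k)" using v by (simp add: scalar_prod_def)
    moreover have "\<dots> = (\<Sum>k\<le>n. G n a b j k * v $ k)"
      using j by (intro sum.cong) (auto simp: Gm_def)
    ultimately show ?thesis by simp
  qed
  then have "\<And>k. k \<le> n \<Longrightarrow> v $ k = 0" using G_definite[OF a b] by blast
  then have "v = 0\<^sub>v (Suc n)" using v by (intro eq_vecI) auto
  with v show False by simp
qed

lemma Gm_inv_ex: "\<exists>X. X \<in> carrier_mat (Suc n) (Suc n) \<and> X * Gm = 1\<^sub>m (Suc n) \<and> Gm * X = 1\<^sub>m (Suc n)"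
proof -
  have "Gm \<in> Units (ring_mat TYPE(real) (Suc n) ())"
    by (rule det_non_zero_imp_unit[OF Gm_carrier Gm_det])
  then show ?thesis unfolding Units_def ring_mat_def by auto
qed

definition Xi :: "real mat" where
  "Xi = (SOME X. X \<in> carrier_mat (Suc n) (Suc n) \<and> X * Gm = 1\<^sub>m (Suc n) \<and> Gm * X = 1\<^sub>m (Suc n))"

lemma Xi: "Xi \<in> carrier_mat (Suc n) (Suc n)" "Xi * Gm = 1\<^sub>m (Suc n)" "Gm * Xi = 1\<^sub>m (Suc n)"
  using someI_ex[OF Gm_inv_ex] unfolding Xi_def by auto

lemma jip_single:
  assumes "k \<le> n"
  shows "jip a b (\<lambda>x. \<Sum>j\<le>n. u j * bern n j x) (bern n k) = (\<Sum>j\<le>n. u j * G n a b j k)"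
proof -
  have "(\<lambda>x. \<Sum>k'\<le>n. (if k' = k then 1 else 0) * bern n k' x) = (\<lambda>x. \<Sum>k'\<le>n. if k' = k then bern n k' x else 0)"
    by (intro ext sum.cong) auto
  also have "\<dots> = bern n k" using assms by (simp add: sum.delta')
  finally have eq: "bern n k = (\<lambda>x. \<Sum>k'\<le>n. (if k' = k then 1 else 0) * bern n k' x)" ..
  have inner: "(\<Sum>k'\<le>n. u j * (if k' = k then 1 else 0) * G n a b j k') = u j * G n a b j k" for j
  proof -
    have "(\<Sum>k'\<le>n. u j * (if k' = k then 1 else 0) * G n a b j k') = (\<Sum>k'\<le>n. if k' = k then u j * G n a b j k' else 0)"
      by (intro sum.cong) auto
    also have "\<dots> = u j * G n a b j k" using assms by (simp add: sum.delta')
    finally show ?thesis .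
  qed
  show ?thesis unfolding eq jip_double[OF a b] inner ..
qed

definition cX :: "int \<Rightarrow> int \<Rightarrow> real" where
  "cX i j = (if 0 \<le> i \<and> i \<le> int n \<and> 0 \<le> j \<and> j \<le> int n then Xi $$ (nat i, nat j) else 0)"

lemma mult_entry:
  assumes "A \<in> carrier_mat (Suc n) (Suc n)" "B \<in> carrier_mat (Suc n) (Suc n)" "i \<le> n" "k \<le> n"
  shows "(A * B) $$ (i, k) = (\<Sum>j\<le>n. A $$ (i, j) * B $$ (j, k))"
proof -
  have "(A * B) $$ (i, k) = Matrix.row A i \<bullet> col B k" using assms by simp
  also have "\<dots> = (\<Sum>j\<in>{0..<Suc n}. Matrix.row A i $ j * col B k $ j)" using assms by (simp add: scalar_prod_def)
  also have "\<dots> = (\<Sum>j\<le>n. A $$ (i, j) * B $$ (j, k))"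
    using assms by (intro sum.cong) auto
  finally show ?thesis .
qed

lemma dual_coeff_eq: "dual_coeff n a b = cX"
  unfolding dual_coeff_def
proof (rule the_equality)
  let ?P = "\<lambda>c. (\<forall>i j. (i < 0 \<or> i > int n \<or> j < 0 \<or> j > int n) \<longrightarrow> c i j = 0) \<and>
      (\<forall>i\<le>n. \<forall>k\<le>n. jip a b (\<lambda>x. \<Sum>j\<le>n. c (int i) (int j) * bern n j x) (bern n k)
                      = (if i = k then 1 else 0))"
  show "?P cX"
  proof (intro conjI allI impI)
    fix i j :: int assume "i < 0 \<or> i > int n \<or> j < 0 \<or> j > int n"
    then show "cX i j = 0" by (auto simp: cX_def)
  next
    fix i k :: nat assume ik: "i \<le> n" "k \<le> n"
    have "jip a b (\<lambda>x. \<Sum>j\<le>n. cX (int i) (int j) * bern n j x) (bern n k)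
        = (\<Sum>j\<le>n. Xi $$ (i, j) * Gm $$ (j, k))"
      unfolding jip_single[OF ik(2)] using ik by (intro sum.cong) (auto simp: cX_def Gm_def)
    also have "\<dots> = (Xi * Gm) $$ (i, k)" by (rule mult_entry[OF Xi(1) Gm_carrier ik, symmetric])
    also have "\<dots> = (if i = k then 1 else 0)" using Xi(2) ik by simp
    finally show "jip a b (\<lambda>x. \<Sum>j\<le>n. cX (int i) (int j) * bern n j x) (bern n k) = (if i = k then 1 else 0)" .
  qed
next
  fix c assume P: "(\<forall>i j. (i < 0 \<or> i > int n \<or> j < 0 \<or> j > int n) \<longrightarrow> c i j = 0) \<and>
      (\<forall>i\<le>n. \<forall>k\<le>n. jip a b (\<lambda>x. \<Sum>j\<le>n. c (int i) (int j) * bern n j x) (bern n k)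
                      = (if i = k then 1 else 0))"
  define Cm where "Cm = mat (Suc n) (Suc n) (\<lambda>(i,j). c (int i) (int j))"
  have Cm: "Cm \<in> carrier_mat (Suc n) (Suc n)" by (simp add: Cm_def)
  have "Cm * Gm = 1\<^sub>m (Suc n)"
  proof (rule eq_matI)
    fix i k assume ik: "i < dim_row (1\<^sub>m (Suc n))" "k < dim_col (1\<^sub>m (Suc n))"
    then have ik': "i \<le> n" "k \<le> n" by auto
    have "(Cm * Gm) $$ (i, k) = (\<Sum>j\<le>n. c (int i) (int j) * G n a b j k)"
      unfolding mult_entry[OF Cm Gm_carrier ik'] using ik' by (intro sum.cong) (auto simp: Cm_def Gm_def)
    also have "\<dots> = jip a b (\<lambda>x. \<Sum>j\<le>n. c (int i) (int j) * bern n j x) (bern n k)"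
      using jip_single[OF ik'(2)] by simp
    also have "\<dots> = 1\<^sub>m (Suc n) $$ (i, k)" using P ik' by auto
    finally show "(Cm * Gm) $$ (i, k) = 1\<^sub>m (Suc n) $$ (i, k)" .
  qed (use Cm Gm_carrier in auto)
  then have "Cm = Xi"
  proof -
    assume CG: "Cm * Gm = 1\<^sub>m (Suc n)"
    have "Cm = Cm * (Gm * Xi)" using Xi(3) Cm by simp
    also have "\<dots> = (Cm * Gm) * Xi" using Cm Gm_carrier Xi(1) by (simp add: assoc_mult_mat)
    also have "\<dots> = Xi" using CG Xi(1) by simp
    finally show ?thesis .
  qed
  show "c = cX"
  proof (intro ext)
    fix i j :: int
    show "c i j = cX i j"
    proof (cases "0 \<le> i \<and> i \<le> int n \<and> 0 \<le> j \<and> j \<le> int n")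
      case True
      then have "nat i < Suc n" "nat j < Suc n" by auto
      then have "Cm $$ (nat i, nat j) = c i j" using True by (simp add: Cm_def)
      then show ?thesis using True \<open>Cm = Xi\<close> by (simp add: cX_def)
    next
      case False
      then show ?thesis using P by (auto simp: cX_def)
    qed
  qed
qed

end


lemma choose_step: "real (Suc k) * real (n choose Suc k) = real (n - k) * real (n choose k)"
proof -
  have "Suc k * (n choose Suc k) = (n - k) * (n choose k)"
    using binomial_absorption[of k n] binomial_absorb_comp[of n k] by simp
  then show ?thesis by (metis of_nat_mult)
qed

lemma R_sym:
  fixes K M N a b :: real
  assumes X: "b + K + M \<noteq> 0" and Y: "a + 2 * N - (K + M) \<noteq> 0"
  shows "- K * (K + b) * ((a + 1 + 2 * N - (K + M)) / (b + (K + M))) + (- 2 * K ^ 2 + (2 * N + a - b) * K)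
         - (N - K) * (N - K + a) * ((b + 1 + (K + M)) / (a + 2 * N - (K + M)))
       = - M * (M + b) * ((a + 1 + 2 * N - (K + M)) / (b + (K + M))) + (- 2 * M ^ 2 + (2 * N + a - b) * M)
         - (N - M) * (N - M + a) * ((b + 1 + (K + M)) / (a + 2 * N - (K + M)))"
proof -
  have X': "b + (K + M) \<noteq> 0" "b + (M + K) \<noteq> 0" using X by (auto simp: algebra_simps)
  have Y': "a + 2 * N - (M + K) \<noteq> 0" using Y by (auto simp: algebra_simps)
  show ?thesis using X' Y Y' by (simp add: field_simps) (simp add: algebra_simps power2_eq_square)
qed

context
  fixes n :: nat and a b :: real
  assumes a: "a > -1" and b: "b > -1"
begin

definition V :: "nat \<Rightarrow> real" where "V s = Beta (b + 1 + real s) (a + 1 + real (2 * n - s))"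

lemma G_V: "G n a b j k = real (n choose j) * real (n choose k) * V (j + k)"
  using G_def[OF a b, of n j k] unfolding V_def by simp

lemma V_down:
  assumes "1 \<le> s" "s \<le> 2 * n"
  shows "V (s - 1) * (b + real s) = V s * (a + 1 + 2 * real n - real s)"
proof -
  define x where "x = b + real s"
  define y where "y = a + 1 + 2 * real n - real s"
  have x: "x > 0" using assms b by (simp add: x_def)
  have y: "y > 0" using assms a by (simp add: y_def)
  have xn: "x \<notin> \<int>\<^sub>\<le>\<^sub>0" using x by (auto elim!: nonpos_Ints_cases)
  have yn: "y \<notin> \<int>\<^sub>\<le>\<^sub>0" using y by (auto elim!: nonpos_Ints_cases)
  have Vs: "V s = Beta (x + 1) y" using assms unfolding V_def x_def y_def by (simp add: of_nat_diff algebra_simps)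
  have Vs1: "V (s - 1) = Beta x (y + 1)" using assms unfolding V_def x_def y_def
    by (simp add: of_nat_diff algebra_simps)
  have 1: "(x + y) * Beta (x + 1) y = x * Beta x y" by (rule Beta_plus1_left[OF xn])
  have 2: "(x + y) * Beta x (y + 1) = y * Beta x y" by (rule Beta_plus1_right[OF yn])
  have "(x + y) * (Beta x (y + 1) * x) = (x + y) * (Beta (x + 1) y * y)"
    using 1 2 by (simp add: algebra_simps)
  then have "Beta x (y + 1) * x = Beta (x + 1) y * y" using x y by simp
  then show ?thesis unfolding Vs Vs1 x_def y_def .
qed

definition Af :: "real \<Rightarrow> real" where "Af h = (h - real n) * (h + b + 1)"
definition Bf :: "real \<Rightarrow> real" where "Bf h = h * (h - real n - a - 1)"
definition dd :: "real \<Rightarrow> real" where "dd h = - 2 * h ^ 2 + (2 * real n + a - b) * h"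
definition lam :: "nat \<Rightarrow> nat \<Rightarrow> real" where
  "lam k l = (if l + 1 = k then Af (real l) else 0) + (if l = k + 1 then Bf (real l) else 0)
            + (if l = k then dd (real k) else 0)"

definition Eform :: "nat \<Rightarrow> nat \<Rightarrow> real" where
  "Eform k m = real (n choose k) * real (n choose m) *
     (- real k * (real k + b) * V (k + m - 1) + dd (real k) * V (k + m)
      - real (n - k) * (real (n - k) + a) * V (k + m + 1))"

lemma sum_delta_lower:
  "(\<Sum>l\<le>n. (if l + 1 = k then f l else 0)) = (if 1 \<le> k \<and> k \<le> Suc n then f (k - 1) else (0::real))"
proof (cases k)
  case 0 then show ?thesis by simp
next
  case (Suc k')
  have "(\<Sum>l\<le>n. (if l + 1 = k then f l else 0)) = (\<Sum>l\<le>n. (if l = k' then f l else 0))"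
    using Suc by (intro sum.cong) auto
  also have "\<dots> = (if k' \<le> n then f k' else 0)" by (simp add: sum.delta')
  finally show ?thesis using Suc by simp
qed

lemma lam_sum:
  assumes "k \<le> n" "m \<le> n"
  shows "(\<Sum>l\<le>n. lam k l * G n a b l m) = Eform k m"
proof -
  have "(\<Sum>l\<le>n. lam k l * G n a b l m) =
     (\<Sum>l\<le>n. (if l + 1 = k then Af (real l) * G n a b l m else 0))
     + (\<Sum>l\<le>n. (if l = k + 1 then Bf (real l) * G n a b l m else 0))
     + (\<Sum>l\<le>n. (if l = k then dd (real k) * G n a b l m else 0))"
    unfolding lam_def sum.distrib[symmetric] by (intro sum.cong) (auto simp: algebra_simps)
  also have "(\<Sum>l\<le>n. (if l + 1 = k then Af (real l) * G n a b l m else 0))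
      = - real k * (real k + b) * real (n choose k) * real (n choose m) * V (k + m - 1)"
  proof (cases k)
    case 0 then show ?thesis by simp
  next
    case (Suc k')
    have "(\<Sum>l\<le>n. (if l + 1 = k then Af (real l) * G n a b l m else 0)) = Af (real k') * G n a b k' m"
      using sum_delta_lower[of k "\<lambda>l. Af (real l) * G n a b l m"] Suc assms by simp
    also have "\<dots> = - real k * (real k + b) * real (n choose k) * real (n choose m) * V (k + m - 1)"
    proof -
      have cs: "real (Suc k') * real (n choose Suc k') = real (n - k') * real (n choose k')" by (rule choose_step)
      have "real (n - k') = real n - real k'" using Suc assms by (simp add: of_nat_diff)
      note nk = this
      have "- real k * (real k + b) * real (n choose k) * real (n choose m) * V (k + m - 1)
          = - (real k' + 1 + b) * (real (Suc k') * real (n choose Suc k')) * real (n choose m) * V (k' + m)"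
        using Suc by (simp add: algebra_simps)
      also have "\<dots> = - (real k' + 1 + b) * (real (n - k') * real (n choose k')) * real (n choose m) * V (k' + m)"
        by (simp only: cs)
      also have "\<dots> = Af (real k') * G n a b k' m"
        unfolding G_V Af_def nk by (simp add: algebra_simps)
      finally show ?thesis by simp
    qed
    finally show ?thesis .
  qed
  also have "(\<Sum>l\<le>n. (if l = k + 1 then Bf (real l) * G n a b l m else 0))
      = - real (n - k) * (real (n - k) + a) * real (n choose k) * real (n choose m) * V (k + m + 1)"
  proof (cases "k = n")
    case True then show ?thesis by simp
  next
    case False
    then have "(\<Sum>l\<le>n. (if l = k + 1 then Bf (real l) * G n a b l m else 0)) = Bf (real (k + 1)) * G n a b (k + 1) m"
      using assms by (simp add: sum.delta')
    also have "\<dots> = - real (n - k) * (real (n - k) + a) * real (n choose k) * real (n choose m) * V (k + m + 1)"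
    proof -
      have cs: "real (Suc k) * real (n choose Suc k) = real (n - k) * real (n choose k)" by (rule choose_step)
      have "real (n - k) = real n - real k" using assms by (simp add: of_nat_diff)
      note nk = this
      have "Bf (real (k + 1)) * G n a b (k + 1) m
          = (real k - real n - a) * (real (Suc k) * real (n choose Suc k)) * real (n choose m) * V (k + m + 1)"
        unfolding G_V Bf_def by (simp add: algebra_simps)
      also have "\<dots> = (real k - real n - a) * (real (n - k) * real (n choose k)) * real (n choose m) * V (k + m + 1)"
        by (simp only: cs)
      also have "\<dots> = - real (n - k) * (real (n - k) + a) * real (n choose k) * real (n choose m) * V (k + m + 1)"
        unfolding nk by (simp add: algebra_simps)
      finally show ?thesis .
    qed
    finally show ?thesis .
  qed
  also have "(\<Sum>l\<le>n. (if l = k then dd (real k) * G n a b l m else 0)) = dd (real k) * G n a b k m"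
    using assms by (simp add: sum.delta')
  finally show ?thesis unfolding Eform_def G_V by (simp add: algebra_simps)
qed


lemma Eform_sym:
  assumes k: "k \<le> n" and m: "m \<le> n"
  shows "Eform k m = Eform m k"
proof (cases "k = m")
  case True then show ?thesis by simp
next
  case False
  define s where "s = k + m"
  have s1: "1 \<le> s" "s + 1 \<le> 2 * n" using False k m by (auto simp: s_def)
  have down: "V (s - 1) * (b + real s) = V s * (a + 1 + 2 * real n - real s)"
    by (rule V_down) (use s1 in auto)
  have up0: "V (s + 1 - 1) * (b + real (s + 1)) = V (s + 1) * (a + 1 + 2 * real n - real (s + 1))"
    by (rule V_down) (use s1 in auto)
  have X: "b + real s > 0" using b s1 by simp
  have Y: "a + 2 * real n - real s > 0" using a s1 by simp
  have nk: "real (n - k) = real n - real k" and nm: "real (n - m) = real n - real m"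
    using k m by (simp_all add: of_nat_diff)
  define K where "K = real k"
  define M where "M = real m"
  define N where "N = real n"
  have sKM: "real s = K + M" by (simp add: s_def K_def M_def)
  define p where "p = (a + 1 + 2 * N - (K + M)) / (b + (K + M))"
  define q where "q = (b + 1 + (K + M)) / (a + 2 * N - (K + M))"
  have p': "p = (a + 1 + 2 * N - (M + K)) / (b + (M + K))" and q': "q = (b + 1 + (M + K)) / (a + 2 * N - (M + K))"
    by (simp_all add: p_def q_def add.commute)
  have Vd: "V (s - 1) = V s * p"
    using down X unfolding p_def sKM[symmetric] N_def by (simp add: field_simps)
  have Vu: "V (s + 1) = V s * q"
    using up0 Y unfolding q_def sKM[symmetric] N_def by (simp add: field_simps)
  have e1: "Eform k m = real (n choose k) * real (n choose m) * V s *
     (- K * (K + b) * p + (- 2 * K ^ 2 + (2 * N + a - b) * K)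
         - (N - K) * (N - K + a) * q)"
    unfolding Eform_def dd_def s_def[symmetric] Vd Vu nk
    unfolding sKM K_def[symmetric] M_def[symmetric] N_def[symmetric]
    by (simp add: algebra_simps)
  have e2: "Eform m k = real (n choose m) * real (n choose k) * V s *
     (- M * (M + b) * p + (- 2 * M ^ 2 + (2 * N + a - b) * M)
         - (N - M) * (N - M + a) * q)"
  proof -
    have "m + k = s" by (simp add: s_def)
    then show ?thesis
      unfolding Eform_def dd_def \<open>m + k = s\<close> Vd Vu nm
      unfolding sKM K_def[symmetric] M_def[symmetric] N_def[symmetric]
      by (simp add: algebra_simps)
  qed
  have R: "- K * (K + b) * p + (- 2 * K ^ 2 + (2 * N + a - b) * K)
         - (N - K) * (N - K + a) * q
       = - M * (M + b) * p + (- 2 * M ^ 2 + (2 * N + a - b) * M)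
         - (N - M) * (N - M + a) * q"
    unfolding p_def q_def
    by (rule R_sym) (use X Y sKM N_def in \<open>auto simp: algebra_simps\<close>)
  show ?thesis unfolding e1 e2 R by simp
qed

end


context
  fixes n :: nat and a b :: real
  assumes a: "a > -1" and b: "b > -1"
begin

definition Lm :: "real mat" where "Lm = mat (Suc n) (Suc n) (\<lambda>(k,l). lam n a b k l)"

lemma Lm_carrier: "Lm \<in> carrier_mat (Suc n) (Suc n)" by (simp add: Lm_def)
lemma LmT_carrier: "transpose_mat Lm \<in> carrier_mat (Suc n) (Suc n)" by (simp add: Lm_def)

lemma G_sym: "G n a b j k = G n a b k j"
  using G_V[OF a b] by (simp add: add.commute)

lemma LG: "Lm * Gm n a b = Gm n a b * transpose_mat Lm"
proof (rule eq_matI)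
  fix k m assume km: "k < dim_row (Gm n a b * transpose_mat Lm)" "m < dim_col (Gm n a b * transpose_mat Lm)"
  then have km': "k \<le> n" "m \<le> n" using Gm_carrier[OF a b, of n] LmT_carrier by auto
  have "(Lm * Gm n a b) $$ (k, m) = (\<Sum>l\<le>n. lam n a b k l * G n a b l m)"
    unfolding mult_entry[OF a b Lm_carrier Gm_carrier[OF a b, of n] km'] using km'
    by (intro sum.cong) (auto simp: Lm_def Gm_def[OF a b])
  also have "\<dots> = Eform n a b k m" by (rule lam_sum[OF a b km'])
  also have "\<dots> = Eform n a b m k" by (rule Eform_sym[OF a b km'])
  also have "\<dots> = (\<Sum>l\<le>n. lam n a b m l * G n a b l k)" by (rule lam_sum[OF a b km'(2,1), symmetric])
  also have "\<dots> = (Gm n a b * transpose_mat Lm) $$ (k, m)"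
    unfolding mult_entry[OF a b Gm_carrier[OF a b, of n] LmT_carrier km'] using km'
    by (intro sum.cong) (auto simp: Lm_def Gm_def[OF a b] G_sym)
  finally show "(Lm * Gm n a b) $$ (k, m) = (Gm n a b * transpose_mat Lm) $$ (k, m)" .
qed (use Gm_carrier[OF a b, of n] Lm_carrier in auto)

lemma XL: "Xi n a b * Lm = transpose_mat Lm * Xi n a b"
proof -
  note X = Xi[OF a b, of n] and Gc = Gm_carrier[OF a b, of n] and L = Lm_carrier and LT = LmT_carrier
  have "Xi n a b * Lm = (Xi n a b * Lm) * (Gm n a b * Xi n a b)"
    using X L by simp
  also have "\<dots> = Xi n a b * (Lm * Gm n a b) * Xi n a b"
    using X L Gc by (simp add: assoc_mult_mat[of _ "Suc n" "Suc n" _ "Suc n" _ "Suc n"])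
  also have "\<dots> = Xi n a b * (Gm n a b * transpose_mat Lm) * Xi n a b" by (simp add: LG)
  also have "\<dots> = (Xi n a b * Gm n a b) * transpose_mat Lm * Xi n a b"
  proof -
    have "Xi n a b * (Gm n a b * transpose_mat Lm) = (Xi n a b * Gm n a b) * transpose_mat Lm"
      by (rule assoc_mult_mat[OF X(1) Gc LT, symmetric])
    then show ?thesis by simp
  qed
  also have "\<dots> = transpose_mat Lm * Xi n a b" using X LT by simp
  finally show ?thesis .
qed

lemma lam_col_sum:
  assumes m: "m \<le> n"
  shows "(\<Sum>l\<le>n. f l * lam n a b l m) =
     (if m + 1 \<le> n then f (m + 1) * Af n b (real m) else 0)
   + (if 1 \<le> m then f (m - 1) * Bf n a (real m) else 0)
   + f m * dd n a b (real m)"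
proof -
  have "(\<Sum>l\<le>n. f l * lam n a b l m) =
     (\<Sum>l\<le>n. (if l = m + 1 then f l * Af n b (real m) else 0))
   + (\<Sum>l\<le>n. (if l + 1 = m then f l * Bf n a (real m) else 0))
   + (\<Sum>l\<le>n. (if l = m then f l * dd n a b (real l) else 0))"
    unfolding lam_def[OF a b] sum.distrib[symmetric] by (intro sum.cong) (auto simp: algebra_simps)
  also have "(\<Sum>l\<le>n. (if l = m + 1 then f l * Af n b (real m) else 0)) =
      (if m + 1 \<le> n then f (m + 1) * Af n b (real m) else 0)"
    by (simp add: sum.delta')
  also have "(\<Sum>l\<le>n. (if l + 1 = m then f l * Bf n a (real m) else 0)) =
      (if 1 \<le> m then f (m - 1) * Bf n a (real m) else 0)"
    using sum_delta_lower[OF a b, of m "\<lambda>l. f l * Bf n a (real m)"] m by simp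
  also have "(\<Sum>l\<le>n. (if l = m then f l * dd n a b (real l) else 0)) = f m * dd n a b (real m)"
    using m by (simp add: sum.delta')
  finally show ?thesis .
qed

lemma rec_nat:
  assumes i: "i + 1 \<le> n" and j: "j \<le> n"
  shows "Af n b (real j) * (if j + 1 \<le> n then Xi n a b $$ (i, j + 1) else 0)
       + Bf n a (real j) * (if 1 \<le> j then Xi n a b $$ (i, j - 1) else 0)
       + dd n a b (real j) * Xi n a b $$ (i, j)
     = Af n b (real i) * Xi n a b $$ (i + 1, j)
       + Bf n a (real i) * (if 1 \<le> i then Xi n a b $$ (i - 1, j) else 0)
       + dd n a b (real i) * Xi n a b $$ (i, j)"
proof -
  note X = Xi[OF a b, of n]
  have i': "i \<le> n" using i by simp
  have "(Xi n a b * Lm) $$ (i, j) = (\<Sum>l\<le>n. Xi n a b $$ (i, l) * lam n a b l j)"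
    unfolding mult_entry[OF a b X(1) Lm_carrier i' j] using j
    by (intro sum.cong) (auto simp: Lm_def)
  also have "\<dots> = Af n b (real j) * (if j + 1 \<le> n then Xi n a b $$ (i, j + 1) else 0)
       + Bf n a (real j) * (if 1 \<le> j then Xi n a b $$ (i, j - 1) else 0)
       + dd n a b (real j) * Xi n a b $$ (i, j)"
    unfolding lam_col_sum[OF j] by (simp add: algebra_simps)
  finally have 1: "(Xi n a b * Lm) $$ (i, j) = \<dots>" .
  have "(transpose_mat Lm * Xi n a b) $$ (i, j) = (\<Sum>l\<le>n. Xi n a b $$ (l, j) * lam n a b l i)"
    unfolding mult_entry[OF a b LmT_carrier X(1) i' j] using i' j
    by (intro sum.cong) (auto simp: Lm_def)
  also have "\<dots> = Af n b (real i) * Xi n a b $$ (i + 1, j)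
       + Bf n a (real i) * (if 1 \<le> i then Xi n a b $$ (i - 1, j) else 0)
       + dd n a b (real i) * Xi n a b $$ (i, j)"
    unfolding lam_col_sum[OF i'] using i by (simp add: algebra_simps)
  finally have 2: "(transpose_mat Lm * Xi n a b) $$ (i, j) = \<dots>" .
  show ?thesis using 1 2 XL by simp
qed

end


lemma alt_pascal:
  fixes f :: "nat \<Rightarrow> real"
  shows "(\<Sum>j\<le>Suc n. (-1) ^ j * real (Suc n choose j) * f j)
       = (\<Sum>j\<le>n. (-1) ^ j * real (n choose j) * (f j - f (Suc j)))"
proof -
  define S1 where "S1 = (\<Sum>j\<le>n. (-1) ^ Suc j * real (n choose j) * f (Suc j))"
  define S2 where "S2 = (\<Sum>j\<le>n. (-1) ^ Suc j * real (n choose Suc j) * f (Suc j))"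
  define T where "T = (\<Sum>j\<le>n. (-1) ^ j * real (n choose j) * f j)"
  have A: "(\<Sum>j\<le>Suc n. (-1) ^ j * real (Suc n choose j) * f j) = f 0 + (S1 + S2)"
    unfolding S1_def S2_def by (subst sum.atMost_Suc_shift) (simp add: sum.distrib[symmetric] algebra_simps)
  have B: "f 0 + S2 = T"
  proof -
    have "f 0 + S2 = (\<Sum>j\<le>Suc n. (-1) ^ j * real (n choose j) * f j)"
      unfolding S2_def by (subst sum.atMost_Suc_shift) simp
    also have "\<dots> = T" unfolding T_def by simp
    finally show ?thesis .
  qed
  have C: "S1 = - (\<Sum>j\<le>n. (-1) ^ j * real (n choose j) * f (Suc j))"
    unfolding S1_def by (simp add: sum_negf[symmetric])
  have "(\<Sum>j\<le>Suc n. (-1) ^ j * real (Suc n choose j) * f j) = T - (\<Sum>j\<le>n. (-1) ^ j * real (n choose j) * f (Suc j))"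
    using A B C by simp
  also have "\<dots> = (\<Sum>j\<le>n. (-1) ^ j * real (n choose j) * (f j - f (Suc j)))"
    unfolding T_def by (simp add: sum_subtractf[symmetric] algebra_simps)
  finally show ?thesis .
qed

lemma degree_diff_shift:
  fixes p :: "real poly"
  assumes "degree p > 0"
  shows "degree (p - pcompose p [:1, 1:]) < degree p"
proof -
  let ?q = "pcompose p [:1, 1:]"
  have dq: "degree ?q = degree p" by (simp add: degree_pcompose)
  have lq: "lead_coeff ?q = lead_coeff p" by (simp add: lead_coeff_comp)
  have le: "degree (p - ?q) \<le> degree p" using dq degree_diff_le by (metis max.idem degree_diff_le_max)
  have c0: "coeff (p - ?q) (degree p) = 0" using lq dq by simp
  show ?thesis
  proof (cases "p - ?q = 0")
    case True then show ?thesis using assms by simp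
  next
    case False
    then have "degree (p - ?q) \<noteq> degree p" using c0 by (metis leading_coeff_0_iff)
    then show ?thesis using le by simp
  qed
qed

lemma fin_diff_poly:
  fixes p :: "real poly"
  assumes "degree p < n"
  shows "(\<Sum>j\<le>n. (-1) ^ j * real (n choose j) * poly p (real j)) = 0"
  using assms
proof (induction n arbitrary: p)
  case 0 then show ?case by simp
next
  case (Suc n)
  have "(\<Sum>j\<le>Suc n. (-1) ^ j * real (Suc n choose j) * poly p (real j))
      = (\<Sum>j\<le>n. (-1) ^ j * real (n choose j) * (poly p (real j) - poly p (real (Suc j))))"
    by (rule alt_pascal)
  also have "\<dots> = (\<Sum>j\<le>n. (-1) ^ j * real (n choose j) * poly (p - pcompose p [:1, 1:]) (real j))"
    by (intro sum.cong) (simp_all add: poly_pcompose algebra_simps)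
  also have "\<dots> = 0"
  proof (cases "degree p = 0")
    case True
    then obtain c where "p = [:c:]" by (metis degree_eq_zeroE)
    then have "p - pcompose p [:1, 1:] = 0" by simp
    then show ?thesis by simp
  next
    case False
    then have "degree (p - pcompose p [:1, 1:]) < n" using degree_diff_shift[of p] Suc.prems by simp
    then show ?thesis by (rule Suc.IH)
  qed
  finally show ?case .
qed

lemma alt_recip:
  fixes x :: real
  assumes "x > 0"
  shows "(\<Sum>j\<le>n. (-1) ^ j * real (n choose j) * (1 / (x + real j))) = fact n / pochhammer x (Suc n)"
  using assms
proof (induction n arbitrary: x)
  case 0 then show ?case by simp
next
  case (Suc n)
  have px: "pochhammer x (Suc (Suc n)) = x * pochhammer (x + 1) (Suc n)" by (rule pochhammer_rec)
  have px2: "pochhammer x (Suc (Suc n)) = pochhammer x (Suc n) * (x + real (Suc n))" by (rule pochhammer_Suc)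
  have pos1: "pochhammer x (Suc n) > 0" "pochhammer (x + 1) (Suc n) > 0" using Suc.prems by (auto intro!: pochhammer_pos)
  have "(\<Sum>j\<le>Suc n. (-1) ^ j * real (Suc n choose j) * (1 / (x + real j)))
      = (\<Sum>j\<le>n. (-1) ^ j * real (n choose j) * (1 / (x + real j) - 1 / (x + real (Suc j))))"
    by (rule alt_pascal)
  also have "\<dots> = (\<Sum>j\<le>n. (-1) ^ j * real (n choose j) * (1 / (x + real j)))
              - (\<Sum>j\<le>n. (-1) ^ j * real (n choose j) * (1 / ((x + 1) + real j)))"
    by (simp add: sum_subtractf[symmetric] algebra_simps)
  also have "\<dots> = fact n / pochhammer x (Suc n) - fact n / pochhammer (x + 1) (Suc n)"
    using Suc.IH[of x] Suc.IH[of "x + 1"] Suc.prems by simp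
  also have "\<dots> = fact (Suc n) / pochhammer x (Suc (Suc n))"
  proof -
    have e: "pochhammer x (Suc n) * (x + real (Suc n)) = x * pochhammer (x + 1) (Suc n)" using px px2 by simp
    define P where "P = pochhammer x (Suc n)"
    define Q where "Q = pochhammer (x + 1) (Suc n)"
    have P: "P > 0" and Q: "Q > 0" using pos1 by (simp_all add: P_def Q_def)
    have e': "x * Q - x * P = P * (real n + 1)" using e unfolding P_def[symmetric] Q_def[symmetric]
      by (simp add: algebra_simps)
    have "fact n / P - fact n / Q = fact n * (x * Q - x * P) / (x * P * Q)"
      using P Q Suc.prems by (simp add: field_simps)
    also have "\<dots> = fact n * (real n + 1) / (x * Q)"
      unfolding e' using P Q Suc.prems by (simp add: field_simps)
    also have "\<dots> = fact (Suc n) / pochhammer x (Suc (Suc n))"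
      unfolding px Q_def[symmetric] by (simp add: algebra_simps)
    finally show ?thesis unfolding P_def Q_def .
  qed
  finally show ?case .
qed


lemma Beta_shift_left:
  fixes x y :: real assumes x: "x > 0" and y: "y > 0"
  shows "Beta (x + real p) y = Beta x y * pochhammer x p / pochhammer (x + y) p"
proof (induction p)
  case 0 then show ?case by simp
next
  case (Suc p)
  define x' where "x' = x + real p"
  have x': "x' > 0" using x by (simp add: x'_def)
  have xn: "x' \<notin> \<int>\<^sub>\<le>\<^sub>0" using x' by (auto elim!: nonpos_Ints_cases)
  have st: "(x' + y) * Beta (x' + 1) y = x' * Beta x' y" by (rule Beta_plus1_left[OF xn])
  have pp: "pochhammer (x + y) p > 0" using x y by (intro pochhammer_pos) simp
  have "Beta (x + real (Suc p)) y = Beta (x' + 1) y" by (simp add: x'_def add_ac)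
  also have "\<dots> = x' * Beta x' y / (x' + y)" using st x' y by (simp add: field_simps)
  also have "\<dots> = x' * (Beta x y * pochhammer x p / pochhammer (x + y) p) / (x' + y)"
    using Suc.IH by (simp add: x'_def)
  also have "\<dots> = Beta x y * pochhammer x (Suc p) / pochhammer (x + y) (Suc p)"
    unfolding pochhammer_Suc using pp x' y by (simp add: x'_def field_simps)
  finally show ?case .
qed

lemma Beta_shift:
  fixes x y :: real assumes x: "x > 0" and y: "y > 0"
  shows "Beta (x + real p) (y + real q) = Beta x y * pochhammer x p * pochhammer y q / pochhammer (x + y) (q + p)"
proof -
  have yq: "y + real q > 0" using y by simp
  have "Beta (x + real p) (y + real q) = Beta x (y + real q) * pochhammer x p / pochhammer (x + (y + real q)) p"
    by (rule Beta_shift_left[OF x yq])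
  also have "Beta x (y + real q) = Beta y x * pochhammer y q / pochhammer (y + x) q"
    using Beta_shift_left[OF y x, of q] by (simp add: Beta_commute)
  also have "pochhammer (x + y) (q + p) = pochhammer (x + y) q * pochhammer (x + y + real q) p"
    by (rule pochhammer_product')
  ultimately show ?thesis by (simp add: Beta_commute add_ac)
qed

context
  fixes n :: nat and a b :: real
  assumes a: "a > -1" and b: "b > -1"
begin

definition Bt :: real where "Bt = Beta (b + 1) (a + 1)"
definition w :: "nat \<Rightarrow> real" where
  "w j = (-1) ^ j / (pochhammer (a + 1) (n - j) * pochhammer (b + 2) j)"

lemma V_poch:
  assumes "s \<le> 2 * n"
  shows "V n a b s = Bt * pochhammer (b + 1) s * pochhammer (a + 1) (2 * n - s) / pochhammer (a + b + 2) (2 * n)"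
proof -
  have "V n a b s = Beta ((b + 1) + real s) ((a + 1) + real (2 * n - s))"
    unfolding V_def[OF a b] by (simp add: add_ac)
  also have "\<dots> = Bt * pochhammer (b + 1) s * pochhammer (a + 1) (2 * n - s) / pochhammer (b + 1 + (a + 1)) (2 * n - s + s)"
    unfolding Bt_def by (rule Beta_shift) (use a b in auto)
  also have "2 * n - s + s = 2 * n" using assms by simp
  also have "b + 1 + (a + 1) = a + b + 2" by simp
  finally show ?thesis .
qed

lemma poch_pos: "pochhammer (a + 1) m > 0" "pochhammer (b + 2) m > 0" "pochhammer (b + 1) m > 0"
  "pochhammer (a + b + 2) m > 0"
  using a b by (auto intro!: pochhammer_pos)

lemma wG_zero:
  assumes k1: "1 \<le> k" and kn: "k \<le> n"
  shows "(\<Sum>j\<le>n. w j * G n a b j k) = 0"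
proof -
  define P :: "real poly" where
    "P = Polynomial.smult (b + 1) ((\<Prod>i<k - 1. [:b + 2 + real i, 1:]) * (\<Prod>i<n - k. [:a + 1 + real n + real i, -1:]))"
  define C where "C = real (n choose k) * Bt / pochhammer (a + b + 2) (2 * n)"
  have degP: "degree P < n"
  proof -
    have "degree (\<Prod>i<k - 1. [:b + 2 + real i, 1:]) \<le> k - 1"
      using degree_prod_sum_le[of "{..<k - 1}" "\<lambda>i. [:b + 2 + real i, 1:]"] by simp
    moreover have "degree (\<Prod>i<n - k. [:a + 1 + real n + real i, -1:]) \<le> n - k"
      using degree_prod_sum_le[of "{..<n - k}" "\<lambda>i. [:a + 1 + real n + real i, -1:]"] by simp
    ultimately have "degree ((\<Prod>i<k - 1. [:b + 2 + real i, 1:]) * (\<Prod>i<n - k. [:a + 1 + real n + real i, -1:])) \<le> (k - 1) + (n - k)"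
      by (meson add_mono degree_mult_le order_trans)
    then show ?thesis unfolding P_def using k1 kn by auto
  qed
  have tm: "w j * G n a b j k = C * ((-1) ^ j * real (n choose j) * poly P (real j))" if j: "j \<le> n" for j
  proof -
    have p1: "pochhammer (b + 1) (j + k) = (b + 1) * pochhammer (b + 2) j * pochhammer (b + 2 + real j) (k - 1)"
    proof -
      have "j + k = Suc j + (k - 1)" using k1 by simp
      then have "pochhammer (b + 1) (j + k) = pochhammer (b + 1) (Suc j) * pochhammer (b + 1 + real (Suc j)) (k - 1)"
        by (simp only: pochhammer_product')
      also have "pochhammer (b + 1) (Suc j) = (b + 1) * pochhammer (b + 2) j"
        by (simp add: pochhammer_rec add_ac)
      finally show ?thesis by (simp add: add_ac)
    qed
    have p2: "pochhammer (a + 1) (2 * n - (j + k)) = pochhammer (a + 1) (n - j) * pochhammer (a + 1 + real (n - j)) (n - k)"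
    proof -
      have "2 * n - (j + k) = (n - j) + (n - k)" using j kn by simp
      then show ?thesis by (simp only: pochhammer_product')
    qed
    have polyP: "poly P (real j) = (b + 1) * (pochhammer (b + 2 + real j) (k - 1) * pochhammer (a + 1 + real (n - j)) (n - k))"
      unfolding P_def using j
      by (simp add: poly_prod pochhammer_prod atLeast0LessThan of_nat_diff algebra_simps)
    have jk: "j + k \<le> 2 * n" using j kn by simp
    define PA where "PA = pochhammer (a + 1) (n - j)"
    define PB where "PB = pochhammer (b + 2) j"
    define PS where "PS = pochhammer (a + b + 2) (2 * n)"
    define Q1 where "Q1 = pochhammer (b + 2 + real j) (k - 1)"
    define Q2 where "Q2 = pochhammer (a + 1 + real (n - j)) (n - k)"
    have PA: "PA \<noteq> 0" and PB: "PB \<noteq> 0" and PS: "PS \<noteq> 0"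
      using poch_pos[of "n - j"] poch_pos[of j] poch_pos[of "2 * n"] by (auto simp: PA_def PB_def PS_def)
    have V: "V n a b (j + k) = Bt * ((b + 1) * PB * Q1) * (PA * Q2) / PS"
      unfolding V_poch[OF jk] p1 p2 PA_def PB_def PS_def Q1_def Q2_def ..
    have W: "w j = (-1) ^ j / (PA * PB)" unfolding w_def PA_def PB_def ..
    have PP: "poly P (real j) = (b + 1) * (Q1 * Q2)" unfolding polyP Q1_def Q2_def ..
    show ?thesis
      unfolding G_V[OF a b] V W PP C_def PS_def[symmetric] using PA PB PS
      by (simp add: field_simps)
  qed
  have "(\<Sum>j\<le>n. w j * G n a b j k) = C * (\<Sum>j\<le>n. (-1) ^ j * real (n choose j) * poly P (real j))"
    by (simp add: tm sum_distrib_left)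
  also have "\<dots> = 0" by (simp add: fin_diff_poly[OF degP])
  finally show ?thesis .
qed


lemma bern_sum_one: "(\<Sum>k\<le>n. 1 * bern n k x) = 1"
proof -
  have "(x + (1 - x)) ^ n = (\<Sum>k\<le>n. real (n choose k) * x ^ k * (1 - x) ^ (n - k))"
    by (rule binomial_ring)
  then show ?thesis by (simp add: bern_def)
qed

lemma Grow_sum:
  assumes j: "j \<le> n"
  shows "(\<Sum>k\<le>n. G n a b j k) = real (n choose j) * Beta (b + 1 + real j) (a + 1 + real (n - j))"
proof -
  have "(\<lambda>x. \<Sum>j'\<le>n. (if j' = j then 1 else 0) * bern n j' x) = (\<lambda>x. \<Sum>j'\<le>n. if j' = j then bern n j' x else 0)"
    by (intro ext sum.cong) auto
  also have "\<dots> = bern n j" using j by (simp add: sum.delta')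
  finally have e1: "(\<lambda>x. \<Sum>j'\<le>n. (if j' = j then 1 else 0) * bern n j' x) = bern n j" .
  have e2: "(\<lambda>x. \<Sum>k\<le>n. 1 * bern n k x) = (\<lambda>x. 1)" using bern_sum_one by simp
  have "jip a b (bern n j) (\<lambda>x. 1) = (\<Sum>j'\<le>n. \<Sum>k\<le>n. (if j' = j then 1 else 0) * 1 * G n a b j' k)"
    using jip_double(1)[OF a b, where n=n and u="\<lambda>j'. if j' = j then 1 else 0" and v="\<lambda>k. 1"] unfolding e1 e2 .
  also have "\<dots> = (\<Sum>j'\<le>n. if j' = j then (\<Sum>k\<le>n. G n a b j' k) else 0)"
    by (intro sum.cong) auto
  also have "\<dots> = (\<Sum>k\<le>n. G n a b j k)" using j by (simp add: sum.delta')
  finally have 1: "jip a b (bern n j) (\<lambda>x. 1) = (\<Sum>k\<le>n. G n a b j k)" .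
  have "jip a b (bern n j) (\<lambda>x. 1) = (LINT x:{0..1}|lborel. real (n choose j) * (wt a b x * (x ^ j * (1 - x) ^ (n - j))))"
    unfolding jip_def by (rule set_lebesgue_integral_cong) (auto simp: wt_def bern_def algebra_simps)
  also have "\<dots> = real (n choose j) * Beta (b + 1 + real j) (a + 1 + real (n - j))"
    by (simp add: wt_mono_int(2)[OF a b])
  finally show ?thesis using 1 by simp
qed

lemma mu_val: "(\<Sum>j\<le>n. w j * G n a b j 0) = Bt * fact n / (pochhammer (a + b + 2) n * pochhammer (b + 2) n)"
proof -
  have "(\<Sum>k\<le>n. \<Sum>j\<le>n. w j * G n a b j k) = (\<Sum>j\<le>n. w j * G n a b j 0) + (\<Sum>k\<in>{..n} - {0}. \<Sum>j\<le>n. w j * G n a b j k)"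
    by (subst sum.remove[of _ 0]) auto
  also have "(\<Sum>k\<in>{..n} - {0}. \<Sum>j\<le>n. w j * G n a b j k) = 0"
    by (intro sum.neutral) (auto intro!: wG_zero)
  finally have 1: "(\<Sum>j\<le>n. w j * G n a b j 0) = (\<Sum>k\<le>n. \<Sum>j\<le>n. w j * G n a b j k)" by simp
  have "(\<Sum>k\<le>n. \<Sum>j\<le>n. w j * G n a b j k) = (\<Sum>j\<le>n. w j * (\<Sum>k\<le>n. G n a b j k))"
    by (subst sum.swap) (simp add: sum_distrib_left)
  also have "\<dots> = (\<Sum>j\<le>n. Bt / pochhammer (a + b + 2) n * (b + 1) * ((-1) ^ j * real (n choose j) * (1 / ((b + 1) + real j))))"
  proof (intro sum.cong refl)
    fix j assume "j \<in> {..n}"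
    then have j: "j \<le> n" by simp
    define PA where "PA = pochhammer (a + 1) (n - j)"
    define PB where "PB = pochhammer (b + 2) j"
    define PB1 where "PB1 = pochhammer (b + 1) j"
    define PS where "PS = pochhammer (a + b + 2) n"
    have PA: "PA \<noteq> 0" and PB: "PB \<noteq> 0" and PS: "PS \<noteq> 0"
      using poch_pos[of "n - j"] poch_pos[of j] poch_pos[of n] by (auto simp: PA_def PB_def PS_def)
    have bj: "b + 1 + real j \<noteq> 0" using b by simp
    have rel: "PB1 * (b + 1 + real j) = (b + 1) * PB"
    proof -
      have "pochhammer (b + 1) (Suc j) = PB1 * (b + 1 + real j)" unfolding PB1_def by (simp add: pochhammer_Suc)
      moreover have "pochhammer (b + 1) (Suc j) = (b + 1) * PB" unfolding PB_def by (simp add: pochhammer_rec add_ac)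
      ultimately show ?thesis by simp
    qed
    have Be: "Beta (b + 1 + real j) (a + 1 + real (n - j)) = Bt * PB1 * PA / PS"
    proof -
      have "Beta (b + 1 + real j) (a + 1 + real (n - j)) = Bt * PB1 * PA / pochhammer (b + 1 + (a + 1)) (n - j + j)"
        unfolding Bt_def PB1_def PA_def by (rule Beta_shift) (use a b in auto)
      also have "n - j + j = n" using j by simp
      also have "b + 1 + (a + 1) = a + b + 2" by simp
      finally show ?thesis unfolding PS_def .
    qed
    have W: "w j = (-1) ^ j / (PA * PB)" unfolding w_def PA_def PB_def ..
    have "w j * (\<Sum>k\<le>n. G n a b j k) = (-1) ^ j / (PA * PB) * (real (n choose j) * (Bt * PB1 * PA / PS))"
      unfolding Grow_sum[OF j] Be W ..
    also have "\<dots> = Bt / PS * ((-1) ^ j * real (n choose j) * (PB1 / PB))"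
      using PA PB PS by (simp add: field_simps)
    also have "PB1 / PB = (b + 1) / (b + 1 + real j)"
      using rel PB bj by (simp add: field_simps)
    finally show "w j * (\<Sum>k\<le>n. G n a b j k) = Bt / pochhammer (a + b + 2) n * (b + 1) * ((-1) ^ j * real (n choose j) * (1 / ((b + 1) + real j)))"
      unfolding PS_def by simp
  qed
  also have "\<dots> = Bt / pochhammer (a + b + 2) n * (b + 1) * (\<Sum>j\<le>n. (-1) ^ j * real (n choose j) * (1 / ((b + 1) + real j)))"
    by (simp add: sum_distrib_left)
  also have "\<dots> = Bt / pochhammer (a + b + 2) n * (b + 1) * (fact n / pochhammer (b + 1) (Suc n))"
    using b by (subst alt_recip) auto
  also have "pochhammer (b + 1) (Suc n) = (b + 1) * pochhammer (b + 2) n" by (simp add: pochhammer_rec add_ac)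
  also have "Bt / pochhammer (a + b + 2) n * (b + 1) * (fact n / ((b + 1) * pochhammer (b + 2) n))
     = Bt * fact n / (pochhammer (a + b + 2) n * pochhammer (b + 2) n)"
  proof -
    have "pochhammer (a + b + 2) n \<noteq> 0" "pochhammer (b + 2) n \<noteq> 0" "b + 1 \<noteq> 0"
      using poch_pos[of n] b by auto
    have gen: "\<And>(B::real) P Q c f. c \<noteq> 0 \<Longrightarrow> B / P * c * (f / (c * Q)) = B * f / (P * Q)"
      by (simp add: field_simps)
    show ?thesis using b by (intro gen) auto
  qed
  finally show ?thesis using 1 by simp
qed


lemma Bt_pos: "Bt > 0"
  unfolding Bt_def Beta_def using a b by (intro divide_pos_pos mult_pos_pos Gamma_real_pos) auto

definition mu :: real where "mu = Bt * fact n / (pochhammer (a + b + 2) n * pochhammer (b + 2) n)"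

lemma mu_nz: "mu \<noteq> 0"
  unfolding mu_def using Bt_pos poch_pos[of n] by auto

lemma row0:
  assumes m: "m \<le> n"
  shows "Xi n a b $$ (0, m) = w m / mu"
proof -
  note X = Xi[OF a b, of n] and Gc = Gm_carrier[OF a b, of n]
  define r where "r j = w j / mu" for j
  have rG: "(\<Sum>j\<le>n. r j * G n a b j k) = (if k = 0 then 1 else 0)" if k: "k \<le> n" for k
  proof (cases "k = 0")
    case True
    have "(\<Sum>j\<le>n. r j * G n a b j k) = (\<Sum>j\<le>n. w j * G n a b j 0) / mu"
      unfolding r_def True by (simp add: sum_divide_distrib)
    also have "\<dots> = 1" using mu_nz unfolding mu_val mu_def by simp
    finally show ?thesis using True by simp
  next
    case False
    have "(\<Sum>j\<le>n. r j * G n a b j k) = (\<Sum>j\<le>n. w j * G n a b j k) / mu"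
      unfolding r_def by (simp add: sum_divide_distrib)
    also have "\<dots> = 0" using False k wG_zero by simp
    finally show ?thesis using False by simp
  qed
  have GX: "(\<Sum>k\<le>n. G n a b j k * Xi n a b $$ (k, m)) = (if j = m then 1 else 0)" if j: "j \<le> n" for j
  proof -
    have "(\<Sum>k\<le>n. G n a b j k * Xi n a b $$ (k, m)) = (Gm n a b * Xi n a b) $$ (j, m)"
      unfolding mult_entry[OF a b Gc X(1) j m] using j
      by (intro sum.cong) (auto simp: Gm_def[OF a b])
    also have "\<dots> = (if j = m then 1 else 0)" using X(3) j m by simp
    finally show ?thesis .
  qed
  have "(\<Sum>k\<le>n. (\<Sum>j\<le>n. r j * G n a b j k) * Xi n a b $$ (k, m)) = (\<Sum>k\<le>n. (if k = 0 then Xi n a b $$ (k, m) else 0))"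
    by (intro sum.cong) (auto simp: rG)
  also have "\<dots> = Xi n a b $$ (0, m)" by (simp add: sum.delta)
  finally have 1: "(\<Sum>k\<le>n. (\<Sum>j\<le>n. r j * G n a b j k) * Xi n a b $$ (k, m)) = Xi n a b $$ (0, m)" .
  have "(\<Sum>k\<le>n. (\<Sum>j\<le>n. r j * G n a b j k) * Xi n a b $$ (k, m)) = (\<Sum>j\<le>n. r j * (\<Sum>k\<le>n. G n a b j k * Xi n a b $$ (k, m)))"
    by (simp add: sum_distrib_left sum_distrib_right mult.assoc) (rule sum.swap)
  also have "\<dots> = (\<Sum>j\<le>n. (if j = m then r j else 0))"
    by (intro sum.cong) (auto simp: GX)
  also have "\<dots> = r m" using m by (simp add: sum.delta')
  finally show ?thesis using 1 by (simp add: r_def)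
qed

end


theorem theorem2p2:
  fixes n :: nat and \<alpha> \<beta> :: real
  assumes "\<alpha> > -1" and "\<beta> > -1"
  defines "\<sigma> \<equiv> \<alpha> + \<beta> + 1"
      and "c \<equiv> dual_coeff n \<alpha> \<beta>"
      and "A \<equiv> (\<lambda>h::real. (h - real n) * (h + \<beta> + 1))"
      and "B \<equiv> (\<lambda>h::real. h * (h - real n - \<alpha> - 1))"
  shows "(\<forall>i j. 0 \<le> i \<and> i \<le> int n - 1 \<and> 0 \<le> j \<and> j \<le> int n \<longrightarrow>
            c (i + 1) j = (1 / A (of_int i)) *
              ((of_int (i - j)) * (2 * of_int i + 2 * of_int j - 2 * real n - \<alpha> + \<beta>) * c i j
               + B (of_int j) * c i (j - 1) + A (of_int j) * c i (j + 1)
               - B (of_int i) * c (i - 1) j))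
       \<and> (\<forall>j::nat. j \<le> n \<longrightarrow>
            c 0 (int j) = pochhammer (\<sigma> + 1) n * pochhammer (\<beta> + 2) n / (fact n * Beta (\<alpha> + 1) (\<beta> + 1))
                 * ((-1) ^ j / (pochhammer (\<alpha> + 1) (n - j) * pochhammer (\<beta> + 2) j)))"
proof -
  note a = assms(1) and b = assms(2)
  have cX: "c = cX n \<alpha> \<beta>" unfolding c_def by (rule dual_coeff_eq[OF a b])
  let ?X = "Xi n \<alpha> \<beta>"
  have cin: "c (int p) (int q) = ?X $$ (p, q)" if "p \<le> n" "q \<le> n" for p q
    using that unfolding cX cX_def[OF a b] by simp
  have cout1: "c p (int (n + 1)) = 0" for p unfolding cX cX_def[OF a b] by simp
  have cout2: "c p (-1) = 0" "c (-1) p = 0" for p unfolding cX cX_def[OF a b] by simp_all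
  have AA: "A h = Af n \<beta> h" for h unfolding A_def Af_def[OF a b] ..
  have BB: "B h = Bf n \<alpha> h" for h unfolding B_def Bf_def[OF a b] ..
  show ?thesis
  proof (intro conjI allI impI)
    fix i j :: int
    assume ij: "0 \<le> i \<and> i \<le> int n - 1 \<and> 0 \<le> j \<and> j \<le> int n"
    obtain i' j' where i': "i = int i'" and j': "j = int j'" using ij by (metis nonneg_eq_int)
    have i'n: "i' + 1 \<le> n" and j'n: "j' \<le> n" using ij i' j' by auto
    have R: "Af n \<beta> (real j') * (if j' + 1 \<le> n then ?X $$ (i', j' + 1) else 0)
       + Bf n \<alpha> (real j') * (if 1 \<le> j' then ?X $$ (i', j' - 1) else 0)
       + dd n \<alpha> \<beta> (real j') * ?X $$ (i', j')
     = Af n \<beta> (real i') * ?X $$ (i' + 1, j')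
       + Bf n \<alpha> (real i') * (if 1 \<le> i' then ?X $$ (i' - 1, j') else 0)
       + dd n \<alpha> \<beta> (real i') * ?X $$ (i', j')"
      by (rule rec_nat[OF a b i'n j'n])
    have c1: "c (i + 1) j = ?X $$ (i' + 1, j')"
      using cin[of "i' + 1" j'] i'n j'n unfolding i' j' by (simp add: add.commute)
    have c2: "c i j = ?X $$ (i', j')" using cin[of i' j'] i'n j'n unfolding i' j' by simp
    have c3: "c i (j + 1) = (if j' + 1 \<le> n then ?X $$ (i', j' + 1) else 0)"
    proof (cases "j' + 1 \<le> n")
      case True then show ?thesis using cin[of i' "j' + 1"] i'n unfolding i' j' by (simp add: add.commute)
    next
      case False then have "j' = n" using j'n by simp
      then show ?thesis using cout1[of i] unfolding j' by (simp add: add.commute)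
    qed
    have c4: "c i (j - 1) = (if 1 \<le> j' then ?X $$ (i', j' - 1) else 0)"
    proof (cases "1 \<le> j'")
      case True
      then have "j - 1 = int (j' - 1)" unfolding j' by simp
      then show ?thesis using True cin[of i' "j' - 1"] i'n j'n unfolding i' by simp
    next
      case False then have "j' = 0" by simp
      then show ?thesis using cout2(1)[of i] unfolding j' by simp
    qed
    have c5: "c (i - 1) j = (if 1 \<le> i' then ?X $$ (i' - 1, j') else 0)"
    proof (cases "1 \<le> i'")
      case True
      then have "i - 1 = int (i' - 1)" unfolding i' by simp
      then show ?thesis using True cin[of "i' - 1" j'] i'n j'n unfolding j' by simp
    next
      case False then have "i' = 0" by simp
      then show ?thesis using cout2(2)[of j] unfolding i' by simp
    qed
    have Anz: "Af n \<beta> (real i') \<noteq> 0"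
      unfolding Af_def[OF a b] using i'n b by auto
    have dd: "dd n \<alpha> \<beta> (real j') - dd n \<alpha> \<beta> (real i')
        = (real i' - real j') * (2 * real i' + 2 * real j' - 2 * real n - \<alpha> + \<beta>)"
      unfolding dd_def[OF a b] by (simp add: algebra_simps power2_eq_square)
    define Xp where "Xp = (if j' + 1 \<le> n then ?X $$ (i', j' + 1) else 0)"
    define Xm where "Xm = (if 1 \<le> j' then ?X $$ (i', j' - 1) else 0)"
    define Xim where "Xim = (if 1 \<le> i' then ?X $$ (i' - 1, j') else 0)"
    define X0 where "X0 = ?X $$ (i', j')"
    define X1 where "X1 = ?X $$ (i' + 1, j')"
    have R': "Af n \<beta> (real i') * X1 = (dd n \<alpha> \<beta> (real j') - dd n \<alpha> \<beta> (real i')) * X0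
       + Bf n \<alpha> (real j') * Xm + Af n \<beta> (real j') * Xp - Bf n \<alpha> (real i') * Xim"
      using R unfolding Xp_def[symmetric] Xm_def[symmetric] Xim_def[symmetric] X0_def[symmetric] X1_def[symmetric]
      by (simp add: algebra_simps)
    have "X1 = (1 / Af n \<beta> (real i')) * ((dd n \<alpha> \<beta> (real j') - dd n \<alpha> \<beta> (real i')) * X0
       + Bf n \<alpha> (real j') * Xm + Af n \<beta> (real j') * Xp - Bf n \<alpha> (real i') * Xim)"
      using R' Anz by (simp add: field_simps)
    then show "c (i + 1) j = (1 / A (of_int i)) *
              ((of_int (i - j)) * (2 * of_int i + 2 * of_int j - 2 * real n - \<alpha> + \<beta>) * c i j
               + B (of_int j) * c i (j - 1) + A (of_int j) * c i (j + 1)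
               - B (of_int i) * c (i - 1) j)"
      unfolding c1 c2 c3 c4 c5 AA BB Xp_def[symmetric] Xm_def[symmetric] Xim_def[symmetric] X0_def[symmetric] X1_def[symmetric] dd
      unfolding i' j' by simp
  next
    fix j :: nat assume j: "j \<le> n"
    have "c 0 (int j) = ?X $$ (0, j)" using cin[of 0 j] j by simp
    also have "\<dots> = w n \<alpha> \<beta> j / mu n \<alpha> \<beta>" by (rule row0[OF a b j])
    also have "\<dots> = pochhammer (\<sigma> + 1) n * pochhammer (\<beta> + 2) n / (fact n * Beta (\<alpha> + 1) (\<beta> + 1))
                 * ((-1) ^ j / (pochhammer (\<alpha> + 1) (n - j) * pochhammer (\<beta> + 2) j))"
    proof -
      have s: "\<sigma> + 1 = \<alpha> + \<beta> + 2" unfolding \<sigma>_def by simp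
      have Bt: "Bt \<alpha> \<beta> = Beta (\<alpha> + 1) (\<beta> + 1)" unfolding Bt_def[OF a b] by (simp add: Beta_commute)
      have nz: "pochhammer (\<alpha> + \<beta> + 2) n \<noteq> 0" "pochhammer (\<beta> + 2) n \<noteq> 0" "Beta (\<alpha> + 1) (\<beta> + 1) \<noteq> 0"
        using poch_pos[OF a b, of n] Bt_pos[OF a b] Bt by auto
      show ?thesis unfolding w_def[OF a b] mu_def[OF a b] s Bt using nz
        by (simp add: field_simps)
    qed
    finally show "c 0 (int j) = pochhammer (\<sigma> + 1) n * pochhammer (\<beta> + 2) n / (fact n * Beta (\<alpha> + 1) (\<beta> + 1))
                 * ((-1) ^ j / (pochhammer (\<alpha> + 1) (n - j) * pochhammer (\<beta> + 2) j))" .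
  qed
qed


end
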